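(* Let $m\in\mathbb{Z}_{>0}$, let $X\sim\mathrm{Unif}[1:2^m]$ and $Q\sim\mathrm{Bern}(7/8)$ be independent, and let $Y=X$ if $Q=0$, while conditionally on $\{X=x,Q=1\}$, $Y\sim\mathrm{Unif}[1:2^m]$ (independently of $x$). Consider any public discussion $W^N$ between Alice (observing $X$) and Bob (observing $Y$), after which Alice outputs $A\in\{0,1\}$ as a stochastic function of $(X,W^N)$ and Bob outputs $B\in\{0,1\}$ as a stochastic function of $(Y,W^N)$ (using private randomness). Then \[ d_{\mathrm{TV}}\Bigl(p_{A,B,W^N},\ \mathrm{Unif}\{(0,0),(1,1)\}\times p_{W^N}\Bigr)\ \ge\ \sqrt2-1-\tfrac14\approx 0.16. \]
   Context: $[a:b]=\{a,\dots,b\}$; $\mathrm{Bern}(\alpha)$ is the distribution with $p(1)=\alpha$, $p(0)=1-\alpha$; $d_{\mathrm{TV}}(p,q)=\frac12\sum|p-q|$ is total variation distance. Public discussion: Alice and Bob, each with private randomness independent of each other and of $(X,Y,Q)$, exchange public finite-valued messages $W_1,\dots,W_N$, odd-indexed produced by Alice as a stochastic function of $X$ and previous messages, even-indexed by Bob as a stochastic function of $Y$ and previous messages; $N\in\mathbb{Z}_{\ge0}$ may be random and is determined by the discussion. *)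

theory Defs
  imports "HOL-Probability.Probability"
begin

definition src_pmf :: "nat \<Rightarrow> (nat \<times> nat) pmf" where
  "src_pmf m = do {
     x \<leftarrow> pmf_of_set {1..2^m};
     q \<leftarrow> bernoulli_pmf (7/8);
     y \<leftarrow> (if q then pmf_of_set {1..2^m} else return_pmf x);
     return_pmf (x, y) }"

text \<open>A public discussion: Alice's message kernel ka (used for odd-indexed
  messages W_1, W_3, ..., i.e. 0-based positions 0,2,...), Bob's kernel kb,
  and a stopping rule st on transcripts (N is the first length at which st holds).\<close>
definition trans_prob ::
  "('x \<Rightarrow> 'w list \<Rightarrow> 'w pmf) \<Rightarrow> ('y \<Rightarrow> 'w list \<Rightarrow> 'w pmf) \<Rightarrow> ('w list \<Rightarrow> bool)
   \<Rightarrow> 'x \<Rightarrow> 'y \<Rightarrow> 'w list \<Rightarrow> real" where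
  "trans_prob ka kb st x y w =
     (if st w \<and> (\<forall>k<length w. \<not> st (take k w))
      then (\<Prod>i<length w. pmf (if even i then ka x (take i w) else kb y (take i w)) (w ! i))
      else 0)"

definition joint_ABW ::
  "(nat \<times> nat) pmf \<Rightarrow> (nat \<Rightarrow> 'w list \<Rightarrow> 'w pmf) \<Rightarrow> (nat \<Rightarrow> 'w list \<Rightarrow> 'w pmf)
   \<Rightarrow> ('w list \<Rightarrow> bool) \<Rightarrow> (nat \<Rightarrow> 'w list \<Rightarrow> bool pmf) \<Rightarrow> (nat \<Rightarrow> 'w list \<Rightarrow> bool pmf)
   \<Rightarrow> bool \<times> bool \<times> 'w list \<Rightarrow> real" where
  "joint_ABW p ka kb st oa ob = (\<lambda>(a, b, w).
     measure_pmf.expectation p (\<lambda>(x, y).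
        trans_prob ka kb st x y w * pmf (oa x w) a * pmf (ob y w) b))"

definition marg_W :: "(bool \<times> bool \<times> 'w list \<Rightarrow> real) \<Rightarrow> 'w list \<Rightarrow> real" where
  "marg_W P w = (\<Sum>a\<in>UNIV. \<Sum>b\<in>UNIV. P (a, b, w))"

definition unif_agree :: "bool \<times> bool \<Rightarrow> real" where
  "unif_agree ab = (if fst ab = snd ab then 1/2 else 0)"

definition dTV :: "('a \<Rightarrow> real) \<Rightarrow> ('a \<Rightarrow> real) \<Rightarrow> real" where
  "dTV p q = (1/2) * (\<Sum>\<^sub>\<infinity>z\<in>UNIV. \<bar>p z - q z\<bar>)"

end

theory Submission imports Defs begin


lemma card_aux: "card (S \<inter> {xa. xa = y \<and> Q}) = (if y \<in> S \<and> Q then 1 else 0)"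
proof -
  have "S \<inter> {xa. xa = y \<and> Q} = (if y \<in> S \<and> Q then {y} else {})" by auto
  then show ?thesis by simp
qed

lemma Int_aux1: "A \<inter> {x. x = y} = (if y \<in> A then {y} else {})" by auto
lemma Int_aux2: "A \<inter> {x. x = y \<and> Q} = (if y \<in> A \<and> Q then {y} else {})" by auto
lemma Int_aux3: "A \<inter> {x. Q \<and> x = y} = (if y \<in> A \<and> Q then {y} else {})" by auto

lemma pmf_src:
  fixes m :: nat
  defines "S \<equiv> {1..(2::nat)^m}"
  shows "pmf (src_pmf m) (x,y) = (if x \<in> S \<and> y \<in> S then (7/8) / (card S)^2 + (if x = y then (1/8) / card S else 0) else 0)"
proof -
  have fin: "finite S" "S \<noteq> {}" unfolding S_def by auto
  then have c: "real (card S) > 0" by auto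
  define G where "G x' = pmf (bernoulli_pmf (7/8) \<bind> (\<lambda>q. (if q then pmf_of_set S else return_pmf x') \<bind> (\<lambda>y'. return_pmf (x', y')))) (x,y)" for x'
  have G: "G x' = (if x' = x then (7/8)*(indicator S y / card S) + (1/8)*(if x = y then 1 else 0) else 0)" for x'
  proof (cases "x' = x")
    case True
    have "pmf (pmf_of_set S \<bind> (\<lambda>y'. return_pmf (x, y'))) (x,y) = (\<Sum>y'\<in>S. indicator {(x,y)} (x,y')) / card S"
      using fin by (simp add: pmf_bind integral_pmf_of_set pmf_return)
    also have "(\<Sum>y'\<in>S. indicator {(x,y)} (x,y')) = (\<Sum>y'\<in>S. if y' = y then 1 else 0 :: real)"
      by (rule sum.cong) (auto simp: indicator_def)
    also have "\<dots> = indicator S y" using fin by (simp add: sum.delta' indicator_def)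
    finally show ?thesis using True unfolding G_def by (simp add: pmf_bind pmf_return indicator_def)
  next
    case False
    then show ?thesis unfolding G_def using fin
      by (simp add: pmf_bind pmf_return indicator_def integral_pmf_of_set)
  qed
  have "pmf (src_pmf m) (x,y) = (\<Sum>x'\<in>S. G x') / card S"
    unfolding src_pmf_def S_def[symmetric] G_def using fin by (simp add: pmf_bind integral_pmf_of_set)
  also have "(\<Sum>x'\<in>S. G x') = (if x \<in> S then G x else 0)"
    unfolding G using fin by (simp add: sum.delta')
  finally show ?thesis using c by (cases "x \<in> S"; auto simp: G indicator_def field_simps power2_eq_square)
qed



definition qprob :: "('x \<Rightarrow> 'w list \<Rightarrow> 'w pmf) \<Rightarrow> ('y \<Rightarrow> 'w list \<Rightarrow> 'w pmf) \<Rightarrow> 'x \<Rightarrow> 'y \<Rightarrow> 'w list \<Rightarrow> real" where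
  "qprob ka kb x y w = (\<Prod>i<length w. pmf (if even i then ka x (take i w) else kb y (take i w)) (w ! i))"

lemma qprob_nonneg: "qprob ka kb x y w \<ge> 0"
  unfolding qprob_def by (intro prod_nonneg) auto

lemma qprob_Nil: "qprob ka kb x y [] = 1"
  unfolding qprob_def by simp

lemma qprob_snoc: "qprob ka kb x y (h @ [c]) = qprob ka kb x y h * pmf (if even (length h) then ka x h else kb y h) c"
proof -
  have "qprob ka kb x y (h @ [c]) = (\<Prod>i<Suc (length h). pmf (if even i then ka x (take i (h@[c])) else kb y (take i (h@[c]))) ((h@[c]) ! i))"
    unfolding qprob_def by simp
  also have "\<dots> = (\<Prod>i<length h. pmf (if even i then ka x (take i (h@[c])) else kb y (take i (h@[c]))) ((h@[c]) ! i)) * pmf (if even (length h) then ka x h else kb y h) c"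
    by (simp add: prod.lessThan_Suc)
  also have "(\<Prod>i<length h. pmf (if even i then ka x (take i (h@[c])) else kb y (take i (h@[c]))) ((h@[c]) ! i)) = qprob ka kb x y h"
    unfolding qprob_def by (intro prod.cong) (auto simp: nth_append)
  finally show ?thesis .
qed

lemma sum_pmf_le_1': "finite C \<Longrightarrow> (\<Sum>c\<in>C. pmf M c) \<le> 1"
  using measure_measure_pmf_finite[of C M] measure_pmf.prob_le_1[of M C] by simp

definition halts :: "('w list \<Rightarrow> bool) \<Rightarrow> 'w list \<Rightarrow> bool" where
  "halts st w \<longleftrightarrow> st w \<and> (\<forall>k<length w. \<not> st (take k w))"

lemma kraft_gen:
  fixes ka :: "'x \<Rightarrow> 'w list \<Rightarrow> 'w pmf" and kb :: "'y \<Rightarrow> 'w list \<Rightarrow> 'w pmf" and F :: "'w list set"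
  assumes F: "finite F" and H: "\<And>w. w \<in> F \<Longrightarrow> halts st w"
  shows "\<forall>h. (\<forall>w\<in>F. length w \<le> length h + d) \<longrightarrow>
           (\<Sum>w\<in>{w\<in>F. take (length h) w = h}. qprob ka kb x y w) \<le> qprob ka kb x y h"
proof (induction d)
  have single: "(\<Sum>w\<in>{w\<in>F. take (length h) w = h}. qprob ka kb x y w) \<le> qprob ka kb x y h"
    if "{w\<in>F. take (length h) w = h} \<subseteq> {h}" for h :: "'w list"
  proof -
    have "(\<Sum>w\<in>{w\<in>F. take (length h) w = h}. qprob ka kb x y w) \<le> (\<Sum>w\<in>{h}. qprob ka kb x y w)"
      using that by (intro sum_mono2) (auto simp: qprob_nonneg)
    then show ?thesis by simp
  qed
  {
    case 0
    show ?case
    proof (intro allI impI)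
      fix h :: "'w list" assume len: "\<forall>w\<in>F. length w \<le> length h + 0"
      have "{w\<in>F. take (length h) w = h} \<subseteq> {h}"
      proof
        fix w assume "w \<in> {w\<in>F. take (length h) w = h}"
        then have "w \<in> F" "take (length h) w = h" by auto
        with len have "w = h" by auto
        then show "w \<in> {h}" by simp
      qed
      then show "(\<Sum>w\<in>{w\<in>F. take (length h) w = h}. qprob ka kb x y w) \<le> qprob ka kb x y h"
        by (rule single)
    qed
  next
    case (Suc d)
    show ?case
    proof (intro allI impI)
      fix h :: "'w list" assume len: "\<forall>w\<in>F. length w \<le> length h + Suc d"
      show "(\<Sum>w\<in>{w\<in>F. take (length h) w = h}. qprob ka kb x y w) \<le> qprob ka kb x y h"
      proof (cases "h \<in> F")
        case True
        have "{w\<in>F. take (length h) w = h} \<subseteq> {h}"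
        proof
          fix w assume w: "w \<in> {w\<in>F. take (length h) w = h}"
          then have wF: "w \<in> F" and tk: "take (length h) w = h" by auto
          show "w \<in> {h}"
          proof (rule ccontr)
            assume "w \<notin> {h}"
            then have "length h < length w" using tk
              by (metis linorder_not_le take_all singletonI)
            moreover have "st h" using H[OF True] unfolding halts_def by simp
            ultimately show False using H[OF wF] tk unfolding halts_def by metis
          qed
        qed
        then show ?thesis by (rule single)
      next
        case False
        define A where "A = {w\<in>F. take (length h) w = h}"
        have finA: "finite A" unfolding A_def using F by simp
        have longA: "length h < length w" if "w \<in> A" for w
        proof -
          have "w \<in> F" "take (length h) w = h" using that unfolding A_def by auto
          then show ?thesis using False by (metis linorder_not_le take_all)
        qed
        define K where "K = (if even (length h) then ka x h else kb y h)"
        have "(\<Sum>w\<in>A. qprob ka kb x y w) = (\<Sum>c\<in>(\<lambda>w. w ! length h) ` A. \<Sum>w\<in>{w. w\<in>A \<and> w ! length h = c}. qprob ka kb x y w)"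
          by (rule sum.image_gen[OF finA])
        also have "\<dots> \<le> (\<Sum>c\<in>(\<lambda>w. w ! length h) ` A. qprob ka kb x y (h @ [c]))"
        proof (rule sum_mono)
          fix c assume "c \<in> (\<lambda>w. w ! length h) ` A"
          have eq: "{w. w\<in>A \<and> w ! length h = c} = {w\<in>F. take (length (h@[c])) w = h@[c]}"
          proof (intro set_eqI iffI)
            fix w assume "w \<in> {w. w\<in>A \<and> w ! length h = c}"
            then have "w \<in> A" "w ! length h = c" by auto
            then show "w \<in> {w\<in>F. take (length (h@[c])) w = h@[c]}"
              using longA[of w] unfolding A_def by (auto simp: take_Suc_conv_app_nth)
          next
            fix w assume w: "w \<in> {w\<in>F. take (length (h@[c])) w = h@[c]}"
            then have wF: "w \<in> F" and tk: "take (Suc (length h)) w = h@[c]" by auto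
            have lw: "length h < length w"
            proof (rule ccontr)
              assume "\<not> length h < length w"
              then have "take (Suc (length h)) w = w" by simp
              then show False using tk \<open>\<not> length h < length w\<close> by auto
            qed
            have "take (length h) w @ [w ! length h] = h @ [c]" using tk take_Suc_conv_app_nth[OF lw] by simp
            then show "w \<in> {w. w\<in>A \<and> w ! length h = c}" unfolding A_def using wF by auto
          qed
          have IH: "(\<Sum>w\<in>{w\<in>F. take (length (h@[c])) w = h@[c]}. qprob ka kb x y w) \<le> qprob ka kb x y (h@[c])"
          proof -
            have "\<forall>w\<in>F. length w \<le> length (h@[c]) + d" using len by simp
            then show ?thesis using Suc.IH by blast
          qed
          show "(\<Sum>w\<in>{w. w\<in>A \<and> w ! length h = c}. qprob ka kb x y w) \<le> qprob ka kb x y (h @ [c])"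
            unfolding eq by (rule IH)
        qed
        also have "\<dots> = qprob ka kb x y h * (\<Sum>c\<in>(\<lambda>w. w ! length h) ` A. pmf K c)"
          unfolding qprob_snoc K_def by (simp add: sum_distrib_left)
        also have "\<dots> \<le> qprob ka kb x y h * 1"
          using finA by (intro mult_left_mono sum_pmf_le_1' qprob_nonneg) auto
        finally show ?thesis unfolding A_def by simp
      qed
    qed
  }
qed

lemma kraft:
  fixes ka :: "'x \<Rightarrow> 'w list \<Rightarrow> 'w pmf" and kb :: "'y \<Rightarrow> 'w list \<Rightarrow> 'w pmf" and F :: "'w list set"
  assumes "finite F"
  shows "(\<Sum>w\<in>F. trans_prob ka kb st x y w) \<le> 1"
proof -
  define F' where "F' = {w\<in>F. halts st w}"
  have fin: "finite F'" unfolding F'_def using assms by simp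
  have "(\<Sum>w\<in>F. trans_prob ka kb st x y w) = (\<Sum>w\<in>F'. qprob ka kb x y w)"
    unfolding F'_def trans_prob_def qprob_def halts_def
    using assms by (simp add: sum.inter_filter[symmetric])
  also have "\<dots> = (\<Sum>w\<in>{w\<in>F'. take (length ([]::'w list)) w = []}. qprob ka kb x y w)" by simp
  also have "\<dots> \<le> qprob ka kb x y []"
  proof -
    have G: "\<forall>h. (\<forall>w\<in>F'. length w \<le> length h + Max (length ` F')) \<longrightarrow>
           (\<Sum>w\<in>{w\<in>F'. take (length h) w = h}. qprob ka kb x y w) \<le> qprob ka kb x y h"
      by (rule kraft_gen[OF fin]) (auto simp: F'_def)
    have "\<forall>w\<in>F'. length w \<le> length ([]::'w list) + Max (length ` F')"
      using fin by simp
    then show ?thesis using G by blast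
  qed
  finally show ?thesis by (simp add: qprob_Nil)
qed


lemma core_aux:
  fixes p q :: real
  assumes p: "0 \<le> p" "p \<le> 1" and q: "0 \<le> q" "q \<le> 1" and t: "(1-p)*(1-q) \<le> 1/2"
  shows "\<bar>p*q - 1/2\<bar> + \<bar>(1-p)*(1-q) - 1/2\<bar> + (1-p)*q + p*(1-q) \<ge> 2* sqrt 2 - 2"
proof -
  define c where "c = sqrt 2"
  have c2: "c*c = 2" unfolding c_def by simp
  have cpos: "c > 0" unfolding c_def by simp
  have cb1: "c < 3/2"
  proof (rule ccontr)
    assume "\<not> c < 3/2" then have "c \<ge> 3/2" by simp
    then have "c*c \<ge> 3/2*(3/2)" by (intro mult_mono) auto
    then show False using c2 by simp
  qed
  define s where "s = p*q"
  define r where "r = sqrt s"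
  have s0: "s \<ge> 0" unfolding s_def using p q by simp
  have r0: "r \<ge> 0" and rr: "r*r = s" unfolding r_def using s0 by auto
  have pq: "p + q \<ge> 2*r" using arith_geo_mean_sqrt[OF p(1) q(1)] unfolding r_def s_def by simp
  have r1: "r \<le> 1" unfolding r_def s_def using p q by (simp add: mult_le_one)
  have tt: "(1-p)*(1-q) = 1 - (p+q) + s" unfolding s_def by algebra
  have d: "(1-p)*q + p*(1-q) = (p+q) - 2 * s" unfolding s_def by algebra
  show ?thesis
  proof (cases "s \<le> 1/2")
    case True
    have rc: "r \<le> c/2"
    proof (rule ccontr)
      assume "\<not> r \<le> c/2" then have "r > c/2" by simp
      then have "r*r > (c/2)*(c/2)" using cpos by (intro mult_strict_mono) auto
      then show False using c2 rr True by simp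
    qed
    have lhs: "\<bar>p*q - 1/2\<bar> + \<bar>(1-p)*(1-q) - 1/2\<bar> + (1-p)*q + p*(1-q) = 2*((p+q) - 2 * s)"
      using True t tt d unfolding s_def by simp
    have "(p+q) - 2 * s \<ge> c - 1"
    proof (cases "r \<ge> 1 - c/2")
      case True
      have "(r - (1 - c/2))*(c/2 - r) \<ge> 0" using True rc by simp
      then have "2*r - 2*(r*r) - (c-1) \<ge> 0" using c2 by (simp add: algebra_simps)
      then show ?thesis using pq rr by simp
    next
      case False
      then have "r*r \<le> (1-c/2)*(1-c/2)" using r0 by (intro mult_mono) auto
      also have "\<dots> = 3/2 - c" using c2 by (simp add: algebra_simps)
      finally show ?thesis using tt t rr by simp
    qed
    then show ?thesis using lhs unfolding c_def by simp
  next
    case False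
    have rc: "r \<ge> c/2"
    proof (rule ccontr)
      assume "\<not> r \<ge> c/2" then have "r < c/2" by simp
      then have "r*r \<le> (c/2)*(c/2)" using r0 by (intro mult_mono) auto
      then show False using c2 rr False by simp
    qed
    have "(1-p)*(1-q) \<le> (1-r)*(1-r)" using tt pq rr by (simp add: algebra_simps)
    also have "\<dots> \<le> (1-c/2)*(1-c/2)" using rc r1 cb1 by (intro mult_mono) auto
    also have "\<dots> = 3/2 - c" using c2 by (simp add: algebra_simps)
    finally have tb: "(1-p)*(1-q) \<le> 3/2 - c" .
    have lhs: "\<bar>p*q - 1/2\<bar> + \<bar>(1-p)*(1-q) - 1/2\<bar> + (1-p)*q + p*(1-q) = 1 - 2*((1-p)*(1-q))"
      using False t tt d unfolding s_def by simp
    then show ?thesis using tb unfolding c_def by simp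
  qed
qed

lemma core_pq:
  fixes p q :: real
  assumes p: "0 \<le> p" "p \<le> 1" and q: "0 \<le> q" "q \<le> 1"
  shows "\<bar>p*q - 1/2\<bar> + \<bar>(1-p)*(1-q) - 1/2\<bar> + (1-p)*q + p*(1-q) \<ge> 2* sqrt 2 - 2"
proof (cases "(1-p)*(1-q) \<le> 1/2")
  case True then show ?thesis using core_aux p q by blast
next
  case False
  have a: "p*q \<le> p" using p q by (simp add: mult_left_le)
  have b: "p*q \<le> q" using p q by (simp add: mult_left_le_one_le)
  have e: "(1-p)*(1-q) = 1 - p - q + p*q" by algebra
  have "p*q \<le> 1/2" using False a b e by linarith
  then have "(1-(1-p))*(1-(1-q)) \<le> 1/2" by simp
  from core_aux[OF _ _ _ _ this] p q
  have "\<bar>(1-p)*(1-q) - 1/2\<bar> + \<bar>(1-(1-p))*(1-(1-q)) - 1/2\<bar> + (1-(1-p))*(1-q) + (1-p)*(1-(1-q)) \<ge> 2* sqrt 2 - 2" by simp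
  then show ?thesis by (simp add: algebra_simps)
qed
lemma core_prod:
  fixes U0 U1 V0 V1 :: real
  assumes "U0 \<ge> 0" "U1 \<ge> 0" "V0 \<ge> 0" "V1 \<ge> 0"
  shows "\<bar>U1*V1 - (U0+U1)*(V0+V1)/2\<bar> + \<bar>U0*V0 - (U0+U1)*(V0+V1)/2\<bar> + U0*V1 + U1*V0
          \<ge> (2* sqrt 2 - 2) * ((U0+U1)*(V0+V1))"
proof (cases "U0 + U1 = 0 \<or> V0 + V1 = 0")
  case True
  then have z: "(U0+U1)*(V0+V1) = 0" by auto
  have n: "U0*V1 \<ge> 0" "U1*V0 \<ge> 0" using assms by simp_all
  show ?thesis unfolding z using n abs_ge_zero[of "U1*V1 - 0/2"] abs_ge_zero[of "U0*V0 - 0/2"] by simp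
next
  case False
  define A where "A = U0 + U1"
  define B where "B = V0 + V1"
  have A: "A > 0" using False assms unfolding A_def by auto
  have B: "B > 0" using False assms unfolding B_def by auto
  define p where "p = U1 / A"
  define q where "q = V1 / B"
  have U1: "U1 = p*A" and U0: "U0 = (1-p)*A" using A unfolding p_def A_def by (auto simp: field_simps)
  have V1: "V1 = q*B" and V0: "V0 = (1-q)*B" using B unfolding q_def B_def by (auto simp: field_simps)
  have p: "0 \<le> p" "p \<le> 1" using assms A unfolding p_def A_def by auto
  have q: "0 \<le> q" "q \<le> 1" using assms B unfolding q_def B_def by auto
  have T: "(U0+U1)*(V0+V1) = A*B" unfolding A_def B_def ..
  have AB: "A*B > 0" using A B by simp
  have m1: "U1*V1 = (A*B)*(p*q)" by (simp add: U1 V1 ac_simps)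
  have m2: "U0*V0 = (A*B)*((1-p)*(1-q))" by (simp add: U0 V0 ac_simps)
  have m3: "U0*V1 + U1*V0 = (A*B)*((1-p)*q + p*(1-q))" by (simp add: U0 U1 V0 V1 algebra_simps)
  have e1: "U1*V1 - (U0+U1)*(V0+V1)/2 = (A*B)*(p*q - 1/2)" unfolding T m1 by (simp add: algebra_simps)
  have e2: "U0*V0 - (U0+U1)*(V0+V1)/2 = (A*B)*((1-p)*(1-q) - 1/2)" unfolding T m2 by (simp add: algebra_simps)
  have e3: "U0*V1 + U1*V0 = (A*B)*((1-p)*q + p*(1-q))" by (rule m3)
  have "\<bar>U1*V1 - (U0+U1)*(V0+V1)/2\<bar> + \<bar>U0*V0 - (U0+U1)*(V0+V1)/2\<bar> + U0*V1 + U1*V0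
      = (A*B) * (\<bar>p*q - 1/2\<bar> + \<bar>(1-p)*(1-q) - 1/2\<bar> + (1-p)*q + p*(1-q))"
    unfolding e1 e2 using e3 A B by (simp add: abs_mult distrib_left)
  also have "\<dots> \<ge> (A*B) * (2* sqrt 2 - 2)" using core_pq[OF p q] AB by (intro mult_left_mono) auto
  finally show ?thesis unfolding T by (simp add: mult.commute)
qed

lemma abs_lb: fixes x y :: real shows "\<bar>7/8*x + 1/8*y\<bar> \<ge> 7/8*\<bar>x\<bar> - 1/8*\<bar>y\<bar>"
  by (auto simp: abs_if)

lemma abs_lb2: fixes x y c :: real shows "\<bar>y\<bar> \<le> c \<Longrightarrow> 7/8*\<bar>x\<bar> - 1/8*c \<le> \<bar>7/8*x + 1/8*y\<bar>"
  by (auto simp: abs_if split: if_splits)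

lemma abs_diff_le: fixes x y :: real shows "x \<ge> 0 \<Longrightarrow> y \<ge> 0 \<Longrightarrow> \<bar>x - y\<bar> \<le> x + y"
  by (auto simp: abs_if)

lemma core_w:
  fixes p00 p01 p10 p11 U0 U1 V0 V1 :: real
  assumes "p00 \<ge> 0" "p01 \<ge> 0" "p10 \<ge> 0" "p11 \<ge> 0"
    "U0 \<ge> 0" "U1 \<ge> 0" "V0 \<ge> 0" "V1 \<ge> 0"
  defines "J00 \<equiv> p00/8 + 7/8*(U0*V0)" and "J01 \<equiv> p01/8 + 7/8*(U0*V1)"
      and "J10 \<equiv> p10/8 + 7/8*(U1*V0)" and "J11 \<equiv> p11/8 + 7/8*(U1*V1)"
  defines "MW \<equiv> J00 + J01 + J10 + J11"
  shows "\<bar>J00 - MW/2\<bar> + \<bar>J01\<bar> + \<bar>J10\<bar> + \<bar>J11 - MW/2\<bar>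
     \<ge> 7/8*(2* sqrt 2 - 2)*((U0+U1)*(V0+V1)) - 1/4*(p00+p01+p10+p11)"
proof -
  define T where "T = (U0+U1)*(V0+V1)"
  define P where "P = p00+p01+p10+p11"
  have P0: "P \<ge> 0" using assms unfolding P_def by simp
  have MW: "MW = P/8 + 7/8*T" unfolding MW_def J00_def J01_def J10_def J11_def P_def T_def
    by (simp add: field_simps)
  have a11: "J11 - MW/2 = 7/8*(U1*V1 - T/2) + 1/8*(p11 - P/2)" unfolding MW J11_def by (simp add: field_simps)
  have a00: "J00 - MW/2 = 7/8*(U0*V0 - T/2) + 1/8*(p00 - P/2)" unfolding MW J00_def by (simp add: field_simps)
  have q11: "\<bar>p11 - P/2\<bar> \<le> p11 + P/2" using P0 assms by (intro abs_diff_le) auto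
  have q00: "\<bar>p00 - P/2\<bar> \<le> p00 + P/2" using P0 assms by (intro abs_diff_le) auto
  have b11: "\<bar>J11 - MW/2\<bar> \<ge> 7/8*\<bar>U1*V1 - T/2\<bar> - 1/8*(p11 + P/2)"
    unfolding a11 by (rule abs_lb2[OF q11])
  have b00: "\<bar>J00 - MW/2\<bar> \<ge> 7/8*\<bar>U0*V0 - T/2\<bar> - 1/8*(p00 + P/2)"
    unfolding a00 by (rule abs_lb2[OF q00])
  have b01: "\<bar>J01\<bar> \<ge> 7/8*(U0*V1)" unfolding J01_def using assms by simp
  have b10: "\<bar>J10\<bar> \<ge> 7/8*(U1*V0)" unfolding J10_def using assms by simp
  have c: "\<bar>U1*V1 - T/2\<bar> + \<bar>U0*V0 - T/2\<bar> + U0*V1 + U1*V0 \<ge> (2* sqrt 2 - 2) * T"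
    unfolding T_def using core_prod assms by blast
  have "7/8*((2* sqrt 2 - 2) * T) - 1/4*P \<le> \<bar>J00 - MW/2\<bar> + \<bar>J01\<bar> + \<bar>J10\<bar> + \<bar>J11 - MW/2\<bar>"
    using b11 b00 b01 b10 c P_def assms(2,3) by (simp add: field_simps)
  then show ?thesis unfolding T_def P_def by (simp only: mult.assoc)
qed

lemma exp_src:
  fixes m :: nat and F :: "nat \<times> nat \<Rightarrow> real"
  defines "S \<equiv> {1..(2::nat)^m}"
  shows "measure_pmf.expectation (src_pmf m) F
     = 1/8 * ((\<Sum>x\<in>S. F (x,x)) / card S) + 7/8 * ((\<Sum>x\<in>S. \<Sum>y\<in>S. F (x,y)) / (card S * card S))"
proof -
  have fin: "finite S" "S \<noteq> {}" unfolding S_def by auto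
  then have c: "real (card S) > 0" by auto
  have P: "pmf (src_pmf m) (x,y) = (if x \<in> S \<and> y \<in> S then (7/8) / (card S)^2 + (if x = y then (1/8) / card S else 0) else 0)" for x y
    unfolding S_def by (rule pmf_src)
  have "measure_pmf.expectation (src_pmf m) F = (\<Sum>a\<in>S\<times>S. F a * pmf (src_pmf m) a)"
  proof (rule integral_measure_pmf_real)
    show "finite (S \<times> S)" using fin by simp
    fix a assume "a \<in> set_pmf (src_pmf m)" "F a \<noteq> 0"
    then have "pmf (src_pmf m) a \<noteq> 0" by (simp add: set_pmf_iff)
    then show "a \<in> S \<times> S" using P[of "fst a" "snd a"] by (cases a) (auto split: if_splits)
  qed
  also have "\<dots> = (\<Sum>x\<in>S. \<Sum>y\<in>S. F (x,y) * pmf (src_pmf m) (x,y))"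
    by (simp add: sum.cartesian_product)
  also have "\<dots> = (\<Sum>x\<in>S. \<Sum>y\<in>S. 7/8 * (F (x,y) / (card S * card S)) + (if y = x then 1/8 * (F (x,y) / card S) else 0))"
    by (intro sum.cong refl) (auto simp: P power2_eq_square field_simps)
  also have "\<dots> = 7/8 * ((\<Sum>x\<in>S. \<Sum>y\<in>S. F (x,y)) / (card S * card S)) + 1/8 * ((\<Sum>x\<in>S. F (x,x)) / card S)"
    using fin by (simp add: sum.distrib sum_distrib_left sum_divide_distrib)
  finally show ?thesis by simp
qed

lemma pmf_bool_sum: "pmf M True + pmf M False = (1::real)"
proof -
  have "(\<Sum>x\<in>UNIV. pmf M x) = 1" by (rule sum_pmf_eq_1) auto
  then show ?thesis by (simp add: UNIV_bool add.commute)
qed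

lemma has_sum_bool_split:
  fixes h :: "bool \<times> 'b \<Rightarrow> real"
  assumes "((\<lambda>y. h (True,y)) has_sum s1) UNIV" "((\<lambda>y. h (False,y)) has_sum s0) UNIV"
  shows "(h has_sum (s1 + s0)) UNIV"
proof -
  have a: "(h has_sum s1) (range (Pair True))"
    using assms(1) by (subst has_sum_reindex) (auto simp: inj_on_def o_def)
  have b: "(h has_sum s0) (range (Pair False))"
    using assms(2) by (subst has_sum_reindex) (auto simp: inj_on_def o_def)
  have u: "range (Pair True) \<union> range (Pair False) = (UNIV :: (bool \<times> 'b) set)"
  proof (rule set_eqI)
    fix z :: "bool \<times> 'b"
    show "z \<in> range (Pair True) \<union> range (Pair False) \<longleftrightarrow> z \<in> UNIV"
      by (cases z; cases "fst z") auto
  qed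
  have "(h has_sum (s1 + s0)) (range (Pair True) \<union> range (Pair False))"
    by (rule has_sum_Un_disjoint[OF a b]) auto
  then show ?thesis unfolding u .
qed

lemma final_arith: fixes k M0 S r :: real
  shows "k - k * M0 / 8 - M0 / 4 \<le> S \<Longrightarrow> k * M0 \<le> k \<Longrightarrow> M0 \<le> 1 \<Longrightarrow> r \<le> 2 \<Longrightarrow> k = 2 * r - 2 \<Longrightarrow> r - 1 - 1/4 \<le> 1/2 * S"
  by linarith

theorem mainTheorem7:
  fixes m :: nat
    and ka kb :: "nat \<Rightarrow> 'w list \<Rightarrow> 'w pmf"
    and st :: "'w list \<Rightarrow> bool"
    and oa ob :: "nat \<Rightarrow> 'w list \<Rightarrow> bool pmf"
  assumes "m > 0"
    and "\<And>x h. finite (set_pmf (ka x h))"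
    and "\<And>y h. finite (set_pmf (kb y h))"
    and "(marg_W (joint_ABW (src_pmf m) ka kb st oa ob) has_sum 1) UNIV"
  shows "dTV (joint_ABW (src_pmf m) ka kb st oa ob)
             (\<lambda>(a, b, w). unif_agree (a, b) * marg_W (joint_ABW (src_pmf m) ka kb st oa ob) w)
           \<ge> sqrt 2 - 1 - 1/4"
proof -
  define S where "S = {1..(2::nat)^m}"
  define c where "c = real (card S)"
  have finS: "finite S" "S \<noteq> {}" unfolding S_def by auto
  then have cpos: "c > 0" unfolding c_def by auto
  define J where "J = joint_ABW (src_pmf m) ka kb st oa ob"
  define MW where "MW = marg_W J"
  define f where "f x w a = pmf (oa x w) a" for x w a
  define g where "g y w b = pmf (ob y w) b" for y w b
  define K where "K x y w = trans_prob ka kb st x y w" for x y w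
  define \<alpha> where "\<alpha> x w = (if halts st w then (\<Prod>i\<in>{..<length w} \<inter> {i. even i}. pmf (ka x (take i w)) (w!i)) else 0)" for x w
  define \<beta> where "\<beta> y w = (\<Prod>i\<in>{..<length w} \<inter> - {i. even i}. pmf (kb y (take i w)) (w!i))" for y w
  have Kab: "K x y w = \<alpha> x w * \<beta> y w" for x y w
  proof -
    have "(\<Prod>i<length w. pmf (if even i then ka x (take i w) else kb y (take i w)) (w ! i))
        = (\<Prod>i<length w. if even i then pmf (ka x (take i w)) (w ! i) else pmf (kb y (take i w)) (w ! i))"
      by (intro prod.cong) auto
    also have "\<dots> = (\<Prod>i\<in>{..<length w} \<inter> {i. even i}. pmf (ka x (take i w)) (w!i)) * \<beta> y w"
      unfolding \<beta>_def by (rule prod.If_cases) simp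
    finally show ?thesis unfolding K_def trans_prob_def \<alpha>_def halts_def by auto
  qed
  have \<alpha>0: "\<alpha> x w \<ge> 0" for x w unfolding \<alpha>_def by (auto intro: prod_nonneg)
  have \<beta>0: "\<beta> y w \<ge> 0" for y w unfolding \<beta>_def by (auto intro: prod_nonneg)
  have K0: "K x y w \<ge> 0" for x y w unfolding Kab using \<alpha>0 \<beta>0 by simp
  define p where "p a b w = (\<Sum>x\<in>S. K x x w * f x w a * g x w b) / c" for a b w
  define U where "U a w = (\<Sum>x\<in>S. \<alpha> x w * f x w a) / c" for a w
  define V where "V b w = (\<Sum>y\<in>S. \<beta> y w * g y w b) / c" for b w
  have p0: "p a b w \<ge> 0" for a b w unfolding p_def f_def g_def using cpos K0 by (auto intro!: sum_nonneg divide_nonneg_pos)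
  have U0: "U a w \<ge> 0" for a w unfolding U_def f_def using cpos \<alpha>0 by (auto intro!: sum_nonneg divide_nonneg_pos)
  have V0: "V b w \<ge> 0" for b w unfolding V_def g_def using cpos \<beta>0 by (auto intro!: sum_nonneg divide_nonneg_pos)
  have Jeq: "J (a,b,w) = p a b w / 8 + 7/8 * (U a w * V b w)" for a b w
  proof -
    have "J (a,b,w) = measure_pmf.expectation (src_pmf m) (\<lambda>(x,y). K x y w * f x w a * g y w b)"
      unfolding J_def joint_ABW_def K_def f_def g_def by simp
    also have "\<dots> = 1/8 * ((\<Sum>x\<in>S. K x x w * f x w a * g x w b) / c)
        + 7/8 * ((\<Sum>x\<in>S. \<Sum>y\<in>S. K x y w * f x w a * g y w b) / (c * c))"
      unfolding S_def c_def by (subst exp_src) simp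
    also have "(\<Sum>x\<in>S. \<Sum>y\<in>S. K x y w * f x w a * g y w b) = (\<Sum>x\<in>S. \<alpha> x w * f x w a) * (\<Sum>y\<in>S. \<beta> y w * g y w b)"
      unfolding sum_product Kab by (simp add: ac_simps)
    finally show ?thesis unfolding p_def U_def V_def by (simp add: field_simps)
  qed
  define P where "P w = p False False w + p False True w + p True False w + p True True w" for w
  define T where "T w = (U False w + U True w) * (V False w + V True w)" for w
  have MWeq: "MW w = P w / 8 + 7/8 * T w" for w
    unfolding MW_def marg_W_def P_def T_def by (simp add: UNIV_bool Jeq algebra_simps)
  have P0: "P w \<ge> 0" for w unfolding P_def using p0 by (simp add: add_nonneg_nonneg)
  have T0: "T w \<ge> 0" for w unfolding T_def using U0 V0 by (simp add: add_nonneg_nonneg)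
  have Pdiag: "P w = (\<Sum>x\<in>S. K x x w) / c" for w
  proof -
    have "P w = (\<Sum>x\<in>S. K x x w * (f x w False + f x w True) * (g x w False + g x w True)) / c"
      unfolding P_def p_def by (simp add: add_divide_distrib[symmetric] sum.distrib[symmetric] algebra_simps)
    also have "\<dots> = (\<Sum>x\<in>S. K x x w) / c"
      unfolding f_def g_def using pmf_bool_sum by (simp add: add.commute)
    finally show ?thesis .
  qed
  have MWs: "(MW has_sum 1) UNIV" using assms(4) unfolding MW_def J_def .
  have MW0: "MW w \<ge> 0" for w unfolding MWeq using P0 T0 by (simp add: add_nonneg_nonneg)
  have Psum_fin: "sum P F \<le> 1" if "finite F" for F
  proof -
    have "sum P F = (\<Sum>x\<in>S. \<Sum>w\<in>F. K x x w) / c"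
      unfolding Pdiag by (simp add: sum_divide_distrib[symmetric] sum.swap[of _ F S])
    also have "\<dots> \<le> (\<Sum>x\<in>S. 1) / c"
      using cpos unfolding K_def by (intro divide_right_mono sum_mono kraft that) auto
    also have "\<dots> = 1" using cpos unfolding c_def by simp
    finally show ?thesis .
  qed
  have Psummable: "P summable_on UNIV"
    by (rule nonneg_bdd_above_summable_on) (use P0 Psum_fin in \<open>auto intro!: bdd_aboveI[of _ 1]\<close>)
  define M0 where "M0 = infsum P UNIV"
  have Phas: "(P has_sum M0) UNIV" using Psummable unfolding M0_def by (simp add: has_sum_infsum)
  have M0le: "M0 \<le> 1" unfolding M0_def using Psummable Psum_fin by (intro infsum_le_finite_sums) auto
  have M0ge: "M0 \<ge> 0" unfolding M0_def using P0 by (intro infsum_nonneg) auto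
  have Thas: "(T has_sum (8/7*(1 - M0/8))) UNIV"
  proof -
    have "((\<lambda>w. P w * (-1/8)) has_sum (M0 * (-1/8))) UNIV" by (rule has_sum_cmult_left[OF Phas])
    from has_sum_add[OF MWs this]
    have "((\<lambda>w. MW w + P w * (-1/8)) has_sum (1 + M0 * (-1/8))) UNIV" .
    from has_sum_cmult_right[OF this, of "8/7"]
    have "((\<lambda>w. 8/7 * (MW w + P w * (-1/8))) has_sum (8/7*(1 + M0 * (-1/8)))) UNIV" .
    moreover have "8/7 * (MW w + P w * (-1/8)) = T w" for w unfolding MWeq by (simp add: field_simps)
    ultimately show ?thesis by simp
  qed
  have J0: "J (a,b,w) \<ge> 0" for a b w unfolding Jeq using p0 U0 V0 by (simp add: add_nonneg_nonneg)
  have MWJ: "MW w = J (False,False,w) + J (False,True,w) + J (True,False,w) + J (True,True,w)" for w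
    unfolding MW_def marg_W_def by (simp add: UNIV_bool)
  have JleMW: "J (a,b,w) \<le> MW w" for a b w
    using J0[of False False w] J0[of False True w] J0[of True False w] J0[of True True w] unfolding MWJ
    by (cases a; cases b) auto
  define D where "D = (\<lambda>z::bool\<times>bool\<times>'w list. \<bar>J z - (\<lambda>(a,b,w). unif_agree (a,b) * MW w) z\<bar>)"
  have Dle: "D (a,b,w) \<le> 2 * MW w" for a b w
  proof -
    have "unif_agree (a,b) * MW w \<le> MW w" "unif_agree (a,b) * MW w \<ge> 0" using MW0[of w]
      unfolding unif_agree_def by auto
    then show ?thesis unfolding D_def using J0[of a b w] JleMW[of a b w] by auto
  qed
  have D0: "D z \<ge> 0" for z unfolding D_def by simp
  have MW2: "(\<lambda>w. 2 * MW w) summable_on UNIV" using has_sum_cmult_right[OF MWs, of 2] has_sum_imp_summable by blast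
  have slice: "((\<lambda>w. D (a,b,w)) has_sum (infsum (\<lambda>w. D (a,b,w)) UNIV)) UNIV" for a b
  proof -
    have "(\<lambda>w. D (a,b,w)) summable_on UNIV"
      by (rule summable_on_comparison_test[OF MW2]) (use Dle D0 in auto)
    then show ?thesis by (simp add: has_sum_infsum)
  qed
  define s where "s a b = infsum (\<lambda>w. D (a,b,w)) UNIV" for a b
  have sl: "((\<lambda>w. D (a,b,w)) has_sum s a b) UNIV" for a b unfolding s_def by (rule slice)
  have Dhas: "(D has_sum ((s True True + s True False) + (s False True + s False False))) UNIV"
  proof (rule has_sum_bool_split)
    show "((\<lambda>y. D (True, y)) has_sum (s True True + s True False)) UNIV"
      by (rule has_sum_bool_split) (use sl in auto)
    show "((\<lambda>y. D (False, y)) has_sum (s False True + s False False)) UNIV"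
      by (rule has_sum_bool_split) (use sl in auto)
  qed
  define L where "L w = (D (True,True,w) + D (True,False,w)) + (D (False,True,w) + D (False,False,w))" for w
  have Lhas: "(L has_sum ((s True True + s True False) + (s False True + s False False))) UNIV"
    unfolding L_def by (intro has_sum_add sl)
  define k where "k = 2 * sqrt 2 - 2"
  have kpos: "k > 0" unfolding k_def by simp
  define G where "G w = 7/8*k*T w - 1/4 * P w" for w
  have GL: "G w \<le> L w" for w
  proof -
    note cw = core_w[of "p False False w" "p False True w" "p True False w" "p True True w"
      "U False w" "U True w" "V False w" "V True w", OF p0 p0 p0 p0 U0 U0 V0 V0]
    show ?thesis unfolding G_def L_def D_def k_def T_def P_def using cw
      by (simp add: unif_agree_def MWJ Jeq)
  qed
  have Ghas: "(G has_sum (7/8*k*(8/7*(1 - M0/8)) + (-1/4) * M0)) UNIV"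
  proof -
    have "((\<lambda>w. 7/8*k*T w + (-1/4) * P w) has_sum (7/8*k*(8/7*(1 - M0/8)) + (-1/4) * M0)) UNIV"
      by (intro has_sum_add has_sum_cmult_right Thas Phas)
    then show ?thesis unfolding G_def by simp
  qed
  have tot: "7/8*k*(8/7*(1 - M0/8)) + (-1/4) * M0 \<le> (s True True + s True False) + (s False True + s False False)"
    by (rule has_sum_mono[OF Ghas Lhas]) (rule GL)
  have dtv: "dTV (joint_ABW (src_pmf m) ka kb st oa ob)
             (\<lambda>(a, b, w). unif_agree (a, b) * marg_W (joint_ABW (src_pmf m) ka kb st oa ob) w)
         = 1/2 * ((s True True + s True False) + (s False True + s False False))"
    unfolding dTV_def J_def[symmetric] MW_def[symmetric] using infsumI[OF Dhas] unfolding D_def by simp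
  have kM: "k * M0 \<le> k" using kpos M0le by (simp add: mult_left_le)
  have s2: "sqrt 2 \<le> 2"
  proof (rule ccontr)
    assume "\<not> sqrt 2 \<le> 2" then have "sqrt 2 > 2" by simp
    then have "sqrt 2 * sqrt 2 > 2 * 2" by (intro mult_strict_mono) auto
    then show False by simp
  qed
  have eqk: "7/8*k*(8/7*(1 - M0/8)) + (-1/4) * M0 = k - k*M0/8 - M0/4" by (simp add: field_simps)
  have tot2: "k - k*M0/8 - M0/4 \<le> (s True True + s True False) + (s False True + s False False)"
    using tot unfolding eqk .
  have "1/2 * ((s True True + s True False) + (s False True + s False False)) \<ge> sqrt 2 - 1 - 1/4"
    by (rule final_arith[OF tot2 kM M0le s2 k_def])
  then show ?thesis unfolding dtv .
qed

end
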